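(* Let $(G,+)$ be an abelian group of order $n$ with a subgroup $H$ of order $h$. Suppose there exists an HDM$(k,n;h)$ over $G$ with hole $H$, and there exists a DCA$(k,h+1;h)$ over $H$ satisfying P1 and P2. Then there exists a DCA$(k,n+1;n)$ over $G$ satisfying P1 and P2. Moreover, if the HDM$(k,n;h)$ and the DCA$(k,h+1;h)$ are cyclic, then there exists a cyclic DCA$(k,n+1;n)$ satisfying P1 and P2.
   Context: A holey difference matrix HDM$(k,n;h)$ over an abelian group $(G,+)$ of order $n$ with hole a subgroup $H$ of order $h$ is an $(n-h)\times k$ matrix $Q=[q(i,j)]$ with entries in $G$ such that for every pair of distinct columns $j,j'$ the multiset $\{q(i,j)-q(i,j') : 0\le i\le n-h-1\}$ contains every element of $G\setminus H$ exactly once; it may be normalized so that its last column is all $0$. It is cyclic if $G=\mathbb{Z}_n$ (and then $H$ is the subgroup of $\mathbb{Z}_n$ of order $h$). A difference covering array DCA$(k,\eta;n)$ over an abelian group $G$ of order $n$ is an $\eta\times k$ matrix with entries in $G$ such that for every pair of distinct columns $j,j'$ the multiset of row differences $q(i,j)-q(i,j')$ contains every element of $G$ at least once; it is cyclic if $G=\mathbb{Z}_n$. A DCA$(k,n+1;n)$ is taken in normalized form: all entries of its last row (row $n$) and last column (column $k-1$) equal $0$. It satisfies P1 if $0$ occurs at least twice in every column, and P2 if for all distinct columns $j,j'$ with $j\neq k-1\neq j'$, the set $\{q(i,j)-q(i,j') : 0\le i\le n-1\}$ equals $G\setminus\{0\}$. *)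

theory Defs
  imports "HOL-Algebra.Algebra" "HOL-Library.Multiset"
begin

text \<open>Groups are HOL-Algebra groups written multiplicatively: the paper's
  difference q(i,j) - q(i,j') is q(i,j) \<otimes> inv q(i,j'), and the paper's 0 is \<one>.
  Matrices are functions nat \<Rightarrow> nat \<Rightarrow> 'a (row, column), only the entries with
  row < #rows and column < k matter.\<close>

definition diff_grp :: "('a, 'b) monoid_scheme \<Rightarrow> 'a \<Rightarrow> 'a \<Rightarrow> 'a" where
  "diff_grp G x y = x \<otimes>\<^bsub>G\<^esub> inv\<^bsub>G\<^esub> y"

text \<open>HDM(k,n;h) over G with hole H, where n = |G|, h = |H|: an (n-h) x k matrix.\<close>
definition is_HDM :: "('a, 'b) monoid_scheme \<Rightarrow> 'a set \<Rightarrow> nat \<Rightarrow> (nat \<Rightarrow> nat \<Rightarrow> 'a) \<Rightarrow> bool" where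
  "is_HDM G H k Q \<longleftrightarrow>
     (\<forall>i < card (carrier G) - card H. \<forall>j < k. Q i j \<in> carrier G) \<and>
     (\<forall>j < k. \<forall>j' < k. j \<noteq> j' \<longrightarrow>
        image_mset (\<lambda>i. diff_grp G (Q i j) (Q i j')) (mset_set {0..< card (carrier G) - card H})
          = mset_set (carrier G - H))"

definition is_DCA :: "('a, 'b) monoid_scheme \<Rightarrow> nat \<Rightarrow> nat \<Rightarrow> (nat \<Rightarrow> nat \<Rightarrow> 'a) \<Rightarrow> bool" where
  "is_DCA G k eta Q \<longleftrightarrow>
     (\<forall>i < eta. \<forall>j < k. Q i j \<in> carrier G) \<and>
     (\<forall>j < k. \<forall>j' < k. j \<noteq> j' \<longrightarrow>
        carrier G \<subseteq> {diff_grp G (Q i j) (Q i j') | i. i < eta})"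

definition is_normalized_DCA :: "('a, 'b) monoid_scheme \<Rightarrow> nat \<Rightarrow> (nat \<Rightarrow> nat \<Rightarrow> 'a) \<Rightarrow> bool" where
  "is_normalized_DCA G k Q \<longleftrightarrow>
     is_DCA G k (card (carrier G) + 1) Q \<and>
     (\<forall>j < k. Q (card (carrier G)) j = \<one>\<^bsub>G\<^esub>) \<and>
     (\<forall>i \<le> card (carrier G). 0 < k \<longrightarrow> Q i (k - 1) = \<one>\<^bsub>G\<^esub>)"

definition P1 :: "('a, 'b) monoid_scheme \<Rightarrow> nat \<Rightarrow> (nat \<Rightarrow> nat \<Rightarrow> 'a) \<Rightarrow> bool" where
  "P1 G k Q \<longleftrightarrow> (\<forall>j < k. 2 \<le> card {i. i \<le> card (carrier G) \<and> Q i j = \<one>\<^bsub>G\<^esub>})"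

definition P2 :: "('a, 'b) monoid_scheme \<Rightarrow> nat \<Rightarrow> (nat \<Rightarrow> nat \<Rightarrow> 'a) \<Rightarrow> bool" where
  "P2 G k Q \<longleftrightarrow> (\<forall>j < k. \<forall>j' < k. j \<noteq> j' \<and> j \<noteq> k - 1 \<and> j' \<noteq> k - 1 \<longrightarrow>
      {diff_grp G (Q i j) (Q i j') | i. i < card (carrier G)} = carrier G - {\<one>\<^bsub>G\<^esub>})"

definition DCA_P12 :: "('a, 'b) monoid_scheme \<Rightarrow> nat \<Rightarrow> (nat \<Rightarrow> nat \<Rightarrow> 'a) \<Rightarrow> bool" where
  "DCA_P12 G k Q \<longleftrightarrow> is_normalized_DCA G k Q \<and> P1 G k Q \<and> P2 G k Q"

end

theory Submission
  imports Defs
begin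

lemma transport:
  assumes bij: "bij_betw \<phi> (carrier K) (carrier L)"
    and one: "\<phi> \<one>\<^bsub>K\<^esub> = \<one>\<^bsub>L\<^esub>" and onec: "\<one>\<^bsub>K\<^esub> \<in> carrier K"
    and dif: "\<forall>x\<in>carrier K. \<forall>y\<in>carrier K. \<phi> (diff_grp K x y) = diff_grp L (\<phi> x) (\<phi> y)"
    and D: "DCA_P12 K k D"
  shows "DCA_P12 L k (\<lambda>i j. \<phi> (D i j))"
proof -
  have cardeq: "card (carrier L) = card (carrier K)" using bij bij_betw_same_card by metis
  let ?m = "card (carrier K)"
  have ent: "\<And>i j. i < ?m + 1 \<Longrightarrow> j < k \<Longrightarrow> D i j \<in> carrier K"
    using D unfolding DCA_P12_def is_normalized_DCA_def is_DCA_def by blast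
  have cov: "\<And>j j'. j < k \<Longrightarrow> j' < k \<Longrightarrow> j \<noteq> j' \<Longrightarrow>
      carrier K \<subseteq> {diff_grp K (D i j) (D i j') | i. i < ?m + 1}"
    using D unfolding DCA_P12_def is_normalized_DCA_def is_DCA_def by blast
  have inj: "inj_on \<phi> (carrier K)" and img: "\<phi> ` carrier K = carrier L"
    using bij unfolding bij_betw_def by auto
  have "is_DCA L k (card (carrier L) + 1) (\<lambda>i j. \<phi> (D i j))"
    unfolding is_DCA_def cardeq
  proof (intro conjI allI impI)
    fix i j assume "i < ?m + 1" "j < k"
    then show "\<phi> (D i j) \<in> carrier L" using ent img by blast
  next
    fix j j' assume jj: "j < k" "j' < k" "j \<noteq> j'"
    show "carrier L \<subseteq> {diff_grp L (\<phi> (D i j)) (\<phi> (D i j')) | i. i < ?m + 1}"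
    proof
      fix y assume "y \<in> carrier L"
      then obtain x where x: "x \<in> carrier K" "y = \<phi> x" using img by blast
      then obtain i where i: "i < ?m + 1" "x = diff_grp K (D i j) (D i j')" using cov[OF jj] by blast
      then have "y = diff_grp L (\<phi> (D i j)) (\<phi> (D i j'))" using x dif ent jj by auto
      then show "y \<in> {diff_grp L (\<phi> (D i j)) (\<phi> (D i j')) | i. i < ?m + 1}" using i by blast
    qed
  qed
  moreover have "\<forall>j < k. \<phi> (D (card (carrier L)) j) = \<one>\<^bsub>L\<^esub>"
    using D one cardeq unfolding DCA_P12_def is_normalized_DCA_def by auto
  moreover have "\<forall>i \<le> card (carrier L). 0 < k \<longrightarrow> \<phi> (D i (k - 1)) = \<one>\<^bsub>L\<^esub>"
    using D one cardeq unfolding DCA_P12_def is_normalized_DCA_def by auto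
  moreover have "P1 L k (\<lambda>i j. \<phi> (D i j))"
    unfolding P1_def
  proof (intro allI impI)
    fix j assume j: "j < k"
    have "{i. i \<le> card (carrier L) \<and> \<phi> (D i j) = \<one>\<^bsub>L\<^esub>} = {i. i \<le> ?m \<and> D i j = \<one>\<^bsub>K\<^esub>}"
    proof -
      have "\<And>i. i \<le> ?m \<Longrightarrow> (\<phi> (D i j) = \<one>\<^bsub>L\<^esub>) = (D i j = \<one>\<^bsub>K\<^esub>)"
      proof -
        fix i assume "i \<le> ?m"
        then have "D i j \<in> carrier K" using ent[OF _ j] by simp
        then show "(\<phi> (D i j) = \<one>\<^bsub>L\<^esub>) = (D i j = \<one>\<^bsub>K\<^esub>)"
          using inj_on_eq_iff[OF inj _ onec] one by metis
      qed
      then show ?thesis unfolding cardeq by (intro Collect_cong) blast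
    qed
    then show "2 \<le> card {i. i \<le> card (carrier L) \<and> \<phi> (D i j) = \<one>\<^bsub>L\<^esub>}"
      using D j unfolding DCA_P12_def P1_def by auto
  qed
  moreover have "P2 L k (\<lambda>i j. \<phi> (D i j))"
    unfolding P2_def
  proof (intro allI impI)
    fix j j' assume jj0: "j < k" "j' < k" "j \<noteq> j' \<and> j \<noteq> k - 1 \<and> j' \<noteq> k - 1"
    note jj = jj0
    have p2: "{diff_grp K (D i j) (D i j') | i. i < ?m} = carrier K - {\<one>\<^bsub>K\<^esub>}"
      using D jj unfolding DCA_P12_def P2_def by blast
    have "{diff_grp L (\<phi> (D i j)) (\<phi> (D i j')) | i. i < card (carrier L)}
        = \<phi> ` {diff_grp K (D i j) (D i j') | i. i < ?m}"
    proof -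
      have "\<And>i. i < ?m \<Longrightarrow> diff_grp L (\<phi> (D i j)) (\<phi> (D i j')) = \<phi> (diff_grp K (D i j) (D i j'))"
        using ent jj dif by simp
      then have "{diff_grp L (\<phi> (D i j)) (\<phi> (D i j')) | i. i < card (carrier L)}
          = {\<phi> (diff_grp K (D i j) (D i j')) | i. i < ?m}" unfolding cardeq by metis
      then show ?thesis by blast
    qed
    also have "\<dots> = carrier L - {\<one>\<^bsub>L\<^esub>}"
      unfolding p2 using inj img onec one by (auto simp: inj_on_image_set_diff)
    finally show "{diff_grp L (\<phi> (D i j)) (\<phi> (D i j')) | i. i < card (carrier L)} = carrier L - {\<one>\<^bsub>L\<^esub>}" by simp
  qed
  ultimately show ?thesis unfolding DCA_P12_def is_normalized_DCA_def by blast
qed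

lemma diff_sub:
  assumes "group G" "subgroup H G" "x \<in> H" "y \<in> H"
  shows "diff_grp (G\<lparr>carrier := H\<rparr>) x y = diff_grp G x y"
  using assms group.m_inv_consistent[OF assms(1,2)] by (simp add: diff_grp_def)

lemma comm_diff:
  assumes "comm_group G" "a \<in> carrier G" "b \<in> carrier G" "c \<in> carrier G"
  shows "diff_grp G (a \<otimes>\<^bsub>G\<^esub> inv\<^bsub>G\<^esub> c) (b \<otimes>\<^bsub>G\<^esub> inv\<^bsub>G\<^esub> c) = diff_grp G a b"
proof -
  interpret comm_group G by fact
  have "c \<otimes>\<^bsub>G\<^esub> (inv\<^bsub>G\<^esub> b \<otimes>\<^bsub>G\<^esub> inv\<^bsub>G\<^esub> c) = inv\<^bsub>G\<^esub> b"
    using assms(2-4) by (simp add: m_lcomm[of c] r_inv)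
  then show ?thesis using assms(2-4)
    by (simp add: diff_grp_def inv_mult m_ac)
qed

lemma split_range:
  fixes f :: "nat \<Rightarrow> 'a"
  assumes "m \<le> n"
  shows "{f i | i. i < n} = {f i | i. i < m} \<union> {f i | i. m \<le> i \<and> i < n}"
  using assms by (auto intro: less_le_trans) (metis not_le)

lemma core:
  fixes G (structure)
  assumes cg: "comm_group G" and fin: "finite (carrier G)" and sg: "subgroup H G"
    and HDM: "is_HDM G H k Q" and D: "DCA_P12 (G\<lparr>carrier := H\<rparr>) k D"
  shows "\<exists>D. DCA_P12 G k D"
proof -
  interpret comm_group G by fact
  define K where "K = G\<lparr>carrier := H\<rparr>"
  define n where "n = card (carrier G)"
  define h where "h = card H"
  define m where "m = n - h"
  have Hsub: "H \<subseteq> carrier G" using sg subgroup.subset by blast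
  have oneH: "\<one> \<in> H" using sg subgroup.one_closed by blast
  have hle: "h \<le> n" unfolding h_def n_def using card_mono[OF fin Hsub] .
  have cK: "carrier K = H" "card (carrier K) = h" unfolding K_def h_def by auto
  have oneK: "\<one>\<^bsub>K\<^esub> = \<one>" unfolding K_def by simp
  have Dent: "\<And>i j. i \<le> h \<Longrightarrow> j < k \<Longrightarrow> D i j \<in> H"
    using D unfolding DCA_P12_def is_normalized_DCA_def is_DCA_def K_def[symmetric] cK by (auto simp: h_def)
  have Dcov: "\<And>j j'. j < k \<Longrightarrow> j' < k \<Longrightarrow> j \<noteq> j' \<Longrightarrow>
      H \<subseteq> {diff_grp K (D i j) (D i j') | i. i < h + 1}"
    using D unfolding DCA_P12_def is_normalized_DCA_def is_DCA_def K_def[symmetric] cK h_def by blast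
  have Dlast: "\<And>j. j < k \<Longrightarrow> D h j = \<one>"
    using D unfolding DCA_P12_def is_normalized_DCA_def K_def[symmetric] cK oneK h_def by blast
  have Dcol: "\<And>i. i \<le> h \<Longrightarrow> 0 < k \<Longrightarrow> D i (k - 1) = \<one>"
    using D unfolding DCA_P12_def is_normalized_DCA_def K_def[symmetric] cK oneK h_def by blast
  have DP1: "\<And>j. j < k \<Longrightarrow> 2 \<le> card {i. i \<le> h \<and> D i j = \<one>}"
    using D unfolding DCA_P12_def P1_def K_def[symmetric] cK oneK h_def by blast
  have DP2: "\<And>j j'. j < k \<Longrightarrow> j' < k \<Longrightarrow> j \<noteq> j' \<Longrightarrow> j \<noteq> k - 1 \<Longrightarrow> j' \<noteq> k - 1 \<Longrightarrow>
      {diff_grp K (D i j) (D i j') | i. i < h} = H - {\<one>}"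
    using D unfolding DCA_P12_def P2_def K_def[symmetric] cK oneK h_def by blast
  have dK: "\<And>x y. x \<in> H \<Longrightarrow> y \<in> H \<Longrightarrow> diff_grp K x y = diff_grp G x y"
    unfolding K_def using diff_sub[OF is_group sg] by blast
  have Qent: "\<And>i j. i < m \<Longrightarrow> j < k \<Longrightarrow> Q i j \<in> carrier G"
    using HDM unfolding is_HDM_def m_def n_def h_def by blast
  have Qset: "\<And>j j'. j < k \<Longrightarrow> j' < k \<Longrightarrow> j \<noteq> j' \<Longrightarrow>
      (\<lambda>i. diff_grp G (Q i j) (Q i j')) ` {0..<m} = carrier G - H"
  proof -
    fix j j' assume "j < k" "j' < k" "j \<noteq> j'"
    then have "image_mset (\<lambda>i. diff_grp G (Q i j) (Q i j')) (mset_set {0..<m}) = mset_set (carrier G - H)"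
      using HDM unfolding is_HDM_def m_def n_def h_def by blast
    then have "set_mset (image_mset (\<lambda>i. diff_grp G (Q i j) (Q i j')) (mset_set {0..<m})) = set_mset (mset_set (carrier G - H))"
      by simp
    then show "(\<lambda>i. diff_grp G (Q i j) (Q i j')) ` {0..<m} = carrier G - H"
      using fin by simp
  qed
  define E where "E i j = (if i < m then Q i j \<otimes> inv (Q i (k - 1)) else D (i - m) j)" for i j
  have Eent: "\<And>i j. i \<le> n \<Longrightarrow> j < k \<Longrightarrow> E i j \<in> carrier G"
  proof -
    fix i j assume "i \<le> n" "j < k"
    then show "E i j \<in> carrier G"
      using Qent Dent Hsub hle unfolding E_def m_def by (cases "i < n - h") auto
  qed
  have E1: "\<And>i j j'. i < m \<Longrightarrow> j < k \<Longrightarrow> j' < k \<Longrightarrow> diff_grp G (E i j) (E i j') = diff_grp G (Q i j) (Q i j')"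
    unfolding E_def using comm_diff[OF cg] Qent by simp
  have E2: "\<And>i j j'. m \<le> i \<Longrightarrow> i \<le> n \<Longrightarrow> j < k \<Longrightarrow> j' < k \<Longrightarrow>
      diff_grp G (E i j) (E i j') = diff_grp K (D (i - m) j) (D (i - m) j')"
    unfolding E_def using dK Dent hle m_def by simp
  have nm: "n = m + h" using hle m_def by simp
  have "is_DCA G k (n + 1) E"
    unfolding is_DCA_def
  proof (intro conjI allI impI)
    fix i j assume "i < n + 1" "j < k" then show "E i j \<in> carrier G" using Eent by simp
  next
    fix j j' assume jj: "j < k" "j' < k" "j \<noteq> j'"
    show "carrier G \<subseteq> {diff_grp G (E i j) (E i j') | i. i < n + 1}"
    proof
      fix g assume g: "g \<in> carrier G"
      show "g \<in> {diff_grp G (E i j) (E i j') | i. i < n + 1}"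
      proof (cases "g \<in> H")
        case True
        then obtain i where i: "i < h + 1" "g = diff_grp K (D i j) (D i j')" using Dcov[OF jj] by blast
        have "g = diff_grp G (E (i + m) j) (E (i + m) j')" using E2[of "i + m" j j'] i jj nm by simp
        moreover have "i + m < n + 1" using i nm by simp
        ultimately show ?thesis by blast
      next
        case False
        have "g \<in> (\<lambda>i. diff_grp G (Q i j) (Q i j')) ` {0..<m}" using Qset[OF jj] g False by blast
        then obtain i where i: "i < m" "g = diff_grp G (Q i j) (Q i j')" by auto
        then have "g = diff_grp G (E i j) (E i j')" using E1 jj by simp
        moreover have "i < n + 1" using i nm by simp
        ultimately show ?thesis by blast
      qed
    qed
  qed
  moreover have "\<forall>j < k. E n j = \<one>" unfolding E_def using Dlast nm by simp
  moreover have "\<forall>i \<le> n. 0 < k \<longrightarrow> E i (k - 1) = \<one>"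
    unfolding E_def using Dcol Qent nm by auto
  moreover have "P1 G k E" unfolding P1_def n_def[symmetric]
  proof (intro allI impI)
    fix j assume j: "j < k"
    have "(\<lambda>i. i + m) ` {i. i \<le> h \<and> D i j = \<one>} \<subseteq> {i. i \<le> n \<and> E i j = \<one>}"
      unfolding E_def using nm by auto
    moreover have "finite {i. i \<le> n \<and> E i j = \<one>}" by simp
    ultimately have "card ((\<lambda>i. i + m) ` {i. i \<le> h \<and> D i j = \<one>}) \<le> card {i. i \<le> n \<and> E i j = \<one>}"
      by (rule card_mono[rotated])
    moreover have "card ((\<lambda>i. i + m) ` {i. i \<le> h \<and> D i j = \<one>}) = card {i. i \<le> h \<and> D i j = \<one>}"
      by (rule card_image) (simp add: inj_on_def)
    ultimately show "2 \<le> card {i. i \<le> n \<and> E i j = \<one>}" using DP1[OF j] by simp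
  qed
  moreover have "P2 G k E" unfolding P2_def n_def[symmetric]
  proof (intro allI impI)
    fix j j' assume jj0: "j < k" "j' < k" "j \<noteq> j' \<and> j \<noteq> k - 1 \<and> j' \<noteq> k - 1"
    then have jj: "j < k" "j' < k" "j \<noteq> j'" by auto
    have A: "{diff_grp G (E i j) (E i j') | i. i < m} = carrier G - H"
    proof -
      have "{diff_grp G (E i j) (E i j') | i. i < m} = {diff_grp G (Q i j) (Q i j') | i. i < m}"
        using E1[OF _ jj(1,2)] by metis
      also have "\<dots> = (\<lambda>i. diff_grp G (Q i j) (Q i j')) ` {0..<m}" by auto
      finally show ?thesis using Qset[OF jj] by simp
    qed
    have B: "{diff_grp G (E i j) (E i j') | i. m \<le> i \<and> i < n} = H - {\<one>}"
    proof -
      have "{diff_grp G (E i j) (E i j') | i. m \<le> i \<and> i < n} = {diff_grp K (D i j) (D i j') | i. i < h}"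
      proof (intro equalityI subsetI)
        fix x assume "x \<in> {diff_grp G (E i j) (E i j') | i. m \<le> i \<and> i < n}"
        then obtain i where "m \<le> i" "i < n" "x = diff_grp G (E i j) (E i j')" by blast
        then show "x \<in> {diff_grp K (D i j) (D i j') | i. i < h}"
          using E2 jj nm by (intro CollectI exI[of _ "i - m"]) auto
      next
        fix x assume "x \<in> {diff_grp K (D i j) (D i j') | i. i < h}"
        then obtain i where "i < h" "x = diff_grp K (D i j) (D i j')" by blast
        then show "x \<in> {diff_grp G (E i j) (E i j') | i. m \<le> i \<and> i < n}"
          using E2[of "i + m" j j'] jj nm by (intro CollectI exI[of _ "i + m"]) auto
      qed
      then show ?thesis using DP2 jj0 by simp
    qed
    have "{diff_grp G (E i j) (E i j') | i. i < n} =
        {diff_grp G (E i j) (E i j') | i. i < m} \<union> {diff_grp G (E i j) (E i j') | i. m \<le> i \<and> i < n}"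
      using nm split_range[of m n "\<lambda>i. diff_grp G (E i j) (E i j')"] by simp
    also have "\<dots> = carrier G - {\<one>}" unfolding A B using Hsub oneH by blast
    finally show "{diff_grp G (E i j) (E i j') | i. i < n} = carrier G - {\<one>}" .
  qed
  ultimately have "DCA_P12 G k E" unfolding DCA_P12_def is_normalized_DCA_def n_def by blast
  then show ?thesis by blast
qed

lemma diff_scale:
  assumes d: "0 < d" and nh: "n = d * h" and x: "x \<in> {0..<int h}" and y: "y \<in> {0..<int h}"
  shows "int d * diff_grp (integer_mod_group h) x y = diff_grp (integer_mod_group n) (int d * x) (int d * y)"
proof -
  have hpos: "0 < h" using x by auto
  have yc: "y \<in> carrier (integer_mod_group h)" using y hpos by (simp add: carrier_integer_mod_group)
  have dy: "int d * y \<in> carrier (integer_mod_group n)"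
    using y d nh hpos by (auto simp: carrier_integer_mod_group)
  have "diff_grp (integer_mod_group h) x y = (x - y) mod int h"
    using yc by (simp add: diff_grp_def mod_add_right_eq)
  then have "int d * diff_grp (integer_mod_group h) x y = (int d * x - int d * y) mod int n"
    using nh by (simp add: mult_mod_right right_diff_distrib)
  also have "\<dots> = diff_grp (integer_mod_group n) (int d * x) (int d * y)"
    using dy by (simp add: diff_grp_def mod_add_right_eq)
  finally show ?thesis .
qed

lemma cyclic_sub:
  assumes n: "0 < n" and sg: "subgroup Hc (integer_mod_group n)" and h: "card Hc = h"
  shows "\<exists>d. 0 < d \<and> n = d * h \<and> Hc = (\<lambda>y. int d * y) ` {0..<int h}"
proof -
  let ?Z = "integer_mod_group n"
  interpret Z: group ?Z by simp
  have cZ: "carrier ?Z = {0..<int n}" using n by (simp add: carrier_integer_mod_group)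
  have Hsub: "Hc \<subseteq> {0..<int n}" using sg subgroup.subset cZ by blast
  have finH: "finite Hc" using Hsub finite_subset by blast
  have "0 \<in> Hc" using sg subgroup.one_closed by fastforce
  then have hpos: "0 < h" using finH h card_gt_0_iff by blast
  have ordZ: "order ?Z = n" unfolding order_def cZ by simp
  have "card (rcosets\<^bsub>?Z\<^esub> Hc) * h = n" using Z.lagrange[OF sg] h ordZ by simp
  then obtain d where nd: "n = d * h" by metis
  then have d: "0 < d" using n by (cases d) auto
  have sub: "Hc \<subseteq> (\<lambda>y. int d * y) ` {0..<int h}"
  proof
    fix x assume xH: "x \<in> Hc"
    interpret S: group "?Z\<lparr>carrier := Hc\<rparr>" using Z.subgroup_imp_group[OF sg] .
    have "x [^]\<^bsub>?Z\<lparr>carrier := Hc\<rparr>\<^esub> order (?Z\<lparr>carrier := Hc\<rparr>) = \<one>\<^bsub>?Z\<lparr>carrier := Hc\<rparr>\<^esub>"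
      using S.pow_order_eq_1 xH by simp
    then have "x [^]\<^bsub>?Z\<^esub> h = 0"
      using Z.nat_pow_consistent[of x h Hc] h by (simp add: order_def)
    then have "(int h * x) mod int n = 0" by simp
    then have "int d * int h dvd x * int h" using nd by (simp add: mod_eq_0_iff_dvd mult.commute)
    then have "int d dvd x" using hpos by simp
    then obtain y where xy: "x = int d * y" by blast
    have "0 \<le> x" "x < int n" using xH Hsub by auto
    then have "0 \<le> y" "y < int h" using xy d nd
      by (auto simp: zero_le_mult_iff)
    then show "x \<in> (\<lambda>y. int d * y) ` {0..<int h}" using xy by auto
  qed
  have "card ((\<lambda>y. int d * y) ` {0..<int h}) = h"
    using d by (subst card_image) (auto simp: inj_on_def)
  then have "Hc = (\<lambda>y. int d * y) ` {0..<int h}"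
    using card_subset_eq[OF _ sub] h by simp
  then show ?thesis using d nd by blast
qed

theorem mainTheorem6:
  fixes G :: "('a, 'b) monoid_scheme" and H :: "'a set" and n h k :: nat
  shows
   "(comm_group G \<and> finite (carrier G) \<and> card (carrier G) = n \<and>
     subgroup H G \<and> card H = h \<and>
     (\<exists>Q. is_HDM G H k Q) \<and>
     (\<exists>D. DCA_P12 (G\<lparr>carrier := H\<rparr>) k D)
     \<longrightarrow> (\<exists>D. DCA_P12 G k D))
    \<and>
    (\<forall>Hc. 0 < n \<and> subgroup Hc (integer_mod_group n) \<and> card Hc = h \<and>
       (\<exists>Q. is_HDM (integer_mod_group n) Hc k Q) \<and>
       (\<exists>D. DCA_P12 (integer_mod_group h) k D)
       \<longrightarrow> (\<exists>D. DCA_P12 (integer_mod_group n) k D))"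
proof (intro conjI allI impI)
  assume "comm_group G \<and> finite (carrier G) \<and> card (carrier G) = n \<and>
     subgroup H G \<and> card H = h \<and>
     (\<exists>Q. is_HDM G H k Q) \<and>
     (\<exists>D. DCA_P12 (G\<lparr>carrier := H\<rparr>) k D)"
  then show "\<exists>D. DCA_P12 G k D" using core by metis
next
  fix Hc assume as: "0 < n \<and> subgroup Hc (integer_mod_group n) \<and> card Hc = h \<and>
       (\<exists>Q. is_HDM (integer_mod_group n) Hc k Q) \<and>
       (\<exists>D. DCA_P12 (integer_mod_group h) k D)"
  let ?Z = "integer_mod_group n"
  let ?L = "?Z\<lparr>carrier := Hc\<rparr>"
  from as obtain Q D where sg: "subgroup Hc ?Z" and Q: "is_HDM ?Z Hc k Q"
    and D: "DCA_P12 (integer_mod_group h) k D" and n: "0 < n" and hc: "card Hc = h" by blast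
  obtain d where d: "0 < d" "n = d * h" and Hc: "Hc = (\<lambda>y. int d * y) ` {0..<int h}"
    using cyclic_sub[OF n sg hc] by blast
  have hpos: "0 < h" using d n by auto
  have cK: "carrier (integer_mod_group h) = {0..<int h}" using hpos by (simp add: carrier_integer_mod_group)
  have bij: "bij_betw (\<lambda>y. int d * y) (carrier (integer_mod_group h)) (carrier ?L)"
    unfolding cK using Hc d by (auto simp: bij_betw_def inj_on_def)
  have dif: "\<forall>x\<in>carrier (integer_mod_group h). \<forall>y\<in>carrier (integer_mod_group h).
      int d * diff_grp (integer_mod_group h) x y = diff_grp ?L (int d * x) (int d * y)"
  proof (intro ballI)
    fix x y assume xy: "x \<in> carrier (integer_mod_group h)" "y \<in> carrier (integer_mod_group h)"
    then have "int d * x \<in> Hc" "int d * y \<in> Hc" using Hc cK by auto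
    then show "int d * diff_grp (integer_mod_group h) x y = diff_grp ?L (int d * x) (int d * y)"
      using diff_scale[OF d(1) d(2)] xy cK diff_sub[OF group_integer_mod_group sg] by simp
  qed
  have "DCA_P12 ?L k (\<lambda>i j. int d * D i j)"
    by (rule transport[OF bij _ _ dif D]) (auto simp: cK hpos)
  then show "\<exists>D. DCA_P12 ?Z k D"
    using core[OF abelian_integer_mod_group _ sg Q] n by (simp add: carrier_integer_mod_group)
qed

end
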